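(* In a PL+C model, suppose $\sum_{h\in\mathcal U}p_h\ge\alpha k$ for some $\alpha>1$. Then for every $i\in\mathcal U$, $$p_i\le\frac{\sum_{j\in\mathcal U}\exp(u_j)}{\exp(u_i)}\cdot\left(\Pr_{PLC}(\mathcal R_{i=1})+\frac{k(\alpha e^{1-\alpha})^k}{1-(\alpha e^{1-\alpha})^k}\right).$$
   Context: PL+C model: universe $\mathcal U=\{1,\dots,n\}$, fixed ranking length $k\le n$. Each item $h$ has a utility $u_h\in\mathbb R$ and a consideration probability $p_h\in(0,1]$. A consideration set $C$ is drawn by including each item independently with probability $p_h$, conditioned on $|C|\ge k$: $\Pr_C(C)=\frac{1}{z_{k,p}}\prod_{h\in C}p_h\prod_{h\notin C}(1-p_h)$ for $|C|\ge k$ (with $z_{k,p}$ the normalizing constant), and $0$ otherwise. Given $C$, a length-$k$ ranking $r$ has probability $\Pr_{PL}(r\mid C)=\prod_{t=1}^k \frac{\exp(u_{r_t})}{\sum_{h\in C\setminus\{r_1,\dots,r_{t-1}\}}\exp(u_h)}$ if all $r_t\in C$, else $0$. $\Pr_{PLC}(r)=\sum_C\Pr_C(C)\Pr_{PL}(r\mid C)$, and for a set $R$ of rankings $\Pr_{PLC}(R)=\sum_{r\in R}\Pr_{PLC}(r)$. $\mathcal R_{i=1}$ is the set of length-$k$ rankings with $i$ in the first position. *)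

theory Defs
  imports Complex_Main
begin

definition universe :: "nat \<Rightarrow> nat set" where
  "universe n = {1..n}"

definition cweight :: "nat \<Rightarrow> (nat \<Rightarrow> real) \<Rightarrow> nat set \<Rightarrow> real" where
  "cweight n p C = (\<Prod>h\<in>C. p h) * (\<Prod>h\<in>universe n - C. 1 - p h)"

definition zkp :: "nat \<Rightarrow> nat \<Rightarrow> (nat \<Rightarrow> real) \<Rightarrow> real" where
  "zkp n k p = (\<Sum>C\<in>{C. C \<subseteq> universe n \<and> k \<le> card C}. cweight n p C)"

definition PrC :: "nat \<Rightarrow> nat \<Rightarrow> (nat \<Rightarrow> real) \<Rightarrow> nat set \<Rightarrow> real" where
  "PrC n k p C = (if C \<subseteq> universe n \<and> k \<le> card C then cweight n p C / zkp n k p else 0)"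

definition PrPL :: "(nat \<Rightarrow> real) \<Rightarrow> nat set \<Rightarrow> nat list \<Rightarrow> real" where
  "PrPL u C r = (if set r \<subseteq> C then
      (\<Prod>t<length r. exp (u (r ! t)) / (\<Sum>h\<in>C - set (take t r). exp (u h)))
    else 0)"

definition rankings :: "nat \<Rightarrow> nat \<Rightarrow> nat list set" where
  "rankings n k = {r. length r = k \<and> distinct r \<and> set r \<subseteq> universe n}"

definition PrPLC :: "nat \<Rightarrow> nat \<Rightarrow> (nat \<Rightarrow> real) \<Rightarrow> (nat \<Rightarrow> real) \<Rightarrow> nat list \<Rightarrow> real" where
  "PrPLC n k p u r = (\<Sum>C\<in>Pow (universe n). PrC n k p C * PrPL u C r)"

definition PrPLC_set :: "nat \<Rightarrow> nat \<Rightarrow> (nat \<Rightarrow> real) \<Rightarrow> (nat \<Rightarrow> real) \<Rightarrow> nat list set \<Rightarrow> real" where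
  "PrPLC_set n k p u R = (\<Sum>r\<in>R. PrPLC n k p u r)"

definition R_first :: "nat \<Rightarrow> nat \<Rightarrow> nat \<Rightarrow> nat list set" where
  "R_first n k i = {r \<in> rankings n k. r ! 0 = i}"

end

theory Submission imports Defs begin

definition QPL :: "(nat \<Rightarrow> real) \<Rightarrow> nat set \<Rightarrow> nat list \<Rightarrow> real" where
  "QPL w D r = (\<Prod>t<length r. w (r ! t) / (\<Sum>h\<in>D - set (take t r). w h))"

lemma QPL_Cons: "QPL w D (x # r) = w x / (\<Sum>h\<in>D. w h) * QPL w (D - {x}) r"
proof -
  have e: "D - set (take (Suc t) (x # r)) = D - {x} - set (take t r)" for t by auto
  show ?thesis
    unfolding QPL_def length_Cons prod.lessThan_Suc_shift e by simp
qed

lemma lists_Suc_eq: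
  "{r. length r = Suc m \<and> distinct r \<and> set r \<subseteq> D} =
   (\<lambda>(x, r). x # r) ` (SIGMA x:D. {r. length r = m \<and> distinct r \<and> set r \<subseteq> D - {x}})"
proof (rule set_eqI, rule iffI)
  fix r assume "r \<in> {r. length r = Suc m \<and> distinct r \<and> set r \<subseteq> D}"
  then show "r \<in> (\<lambda>(x, r). x # r) ` (SIGMA x:D. {r. length r = m \<and> distinct r \<and> set r \<subseteq> D - {x}})"
    by (cases r) (auto intro!: image_eqI[where x="(hd r, tl r)"])
qed auto

lemma QPL_sum:
  assumes "finite D" "m \<le> card D" "\<And>h. 0 < w h"
  shows "(\<Sum>r\<in>{r. length r = m \<and> distinct r \<and> set r \<subseteq> D}. QPL w D r) = 1"
  using assms(1,2)
proof (induction m arbitrary: D)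
  case 0
  have "{r. length r = 0 \<and> distinct r \<and> set r \<subseteq> D} = {[]}" by auto
  then show ?case by (simp add: QPL_def)
next
  case (Suc m)
  have fin: "finite {r. length r = m \<and> distinct r \<and> set r \<subseteq> D - {x}}" for x
    by (rule finite_subset[OF _ finite_lists_length_eq[of "D - {x}" m]]) (use Suc.prems in auto)
  have inj: "inj_on (\<lambda>(x, r). x # r) (SIGMA x:D. {r. length r = m \<and> distinct r \<and> set r \<subseteq> D - {x}})"
    by (auto simp: inj_on_def)
  have ne: "D \<noteq> {}" using Suc.prems by auto
  have Wpos: "0 < (\<Sum>h\<in>D. w h)" using Suc.prems(1) ne assms(3) by (simp add: sum_pos)
  have "(\<Sum>r\<in>{r. length r = Suc m \<and> distinct r \<and> set r \<subseteq> D}. QPL w D r)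
      = (\<Sum>(x,r)\<in>(SIGMA x:D. {r. length r = m \<and> distinct r \<and> set r \<subseteq> D - {x}}). QPL w D (x # r))"
    unfolding lists_Suc_eq by (subst sum.reindex[OF inj]) (simp add: case_prod_unfold)
  also have "\<dots> = (\<Sum>x\<in>D. \<Sum>r\<in>{r. length r = m \<and> distinct r \<and> set r \<subseteq> D - {x}}. QPL w D (x # r))"
    by (rule sum.Sigma[symmetric]) (use Suc.prems fin in auto)
  also have "\<dots> = (\<Sum>x\<in>D. w x / (\<Sum>h\<in>D. w h))"
  proof (rule sum.cong[OF refl])
    fix x assume x: "x \<in> D"
    have c: "m \<le> card (D - {x})" using Suc.prems x by auto
    show "(\<Sum>r\<in>{r. length r = m \<and> distinct r \<and> set r \<subseteq> D - {x}}. QPL w D (x # r)) = w x / (\<Sum>h\<in>D. w h)"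
      unfolding QPL_Cons sum_distrib_left[symmetric] using Suc.IH[of "D - {x}"] Suc.prems c by simp
  qed
  also have "\<dots> = 1" using Wpos by (simp add: sum_divide_distrib[symmetric])
  finally show ?case .
qed


lemma QPL_nonneg: "(\<And>h. 0 < w h) \<Longrightarrow> 0 \<le> QPL w D r"
  unfolding QPL_def by (intro prod_nonneg divide_nonneg_nonneg sum_nonneg) (auto intro: less_imp_le)

lemma PrPL_QPL: "PrPL u C r = (if set r \<subseteq> C then QPL (\<lambda>h. exp (u h)) C r else 0)"
  unfolding PrPL_def QPL_def by simp

lemma PrPL_nonneg: "0 \<le> PrPL u C r"
  unfolding PrPL_QPL by (auto intro: QPL_nonneg)

lemma finite_rankings: "finite (rankings n k)"
  unfolding rankings_def
  by (rule finite_subset[OF _ finite_lists_length_eq[of "universe n" k]]) (auto simp: universe_def)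

lemma PL_first:
  assumes C: "C \<subseteq> universe n" "i \<in> C" "k \<le> card C" "1 \<le> k"
  shows "exp (u i) / (\<Sum>h\<in>C. exp (u h)) \<le> (\<Sum>r\<in>R_first n k i. PrPL u C r)"
proof -
  define L where "L = {r. length r = k - 1 \<and> distinct r \<and> set r \<subseteq> C - {i}}"
  have finC: "finite C" using C(1) finite_subset by (auto simp: universe_def)
  have sub: "(\<lambda>r. i # r) ` L \<subseteq> R_first n k i"
    using C unfolding L_def R_first_def rankings_def by auto blast+
  have finR: "finite (R_first n k i)"
    using finite_rankings[of n k] unfolding R_first_def by auto
  have "(\<Sum>r\<in>(\<lambda>r. i # r) ` L. PrPL u C r) \<le> (\<Sum>r\<in>R_first n k i. PrPL u C r)"
    by (rule sum_mono2[OF finR sub]) (simp add: PrPL_nonneg)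
  moreover have "(\<Sum>r\<in>(\<lambda>r. i # r) ` L. PrPL u C r) = (\<Sum>r\<in>L. PrPL u C (i # r))"
    by (subst sum.reindex) (auto simp: inj_on_def)
  moreover have "\<dots> = (\<Sum>r\<in>L. exp (u i) / (\<Sum>h\<in>C. exp (u h)) * QPL (\<lambda>h. exp (u h)) (C - {i}) r)"
    by (rule sum.cong[OF refl]) (use C in \<open>auto simp: L_def PrPL_QPL QPL_Cons\<close>)
  moreover have "(\<Sum>r\<in>L. QPL (\<lambda>h. exp (u h)) (C - {i}) r) = 1"
    unfolding L_def by (rule QPL_sum) (use C finC in auto)
  moreover have "(\<Sum>r\<in>L. exp (u i) / (\<Sum>h\<in>C. exp (u h)) * QPL (\<lambda>h. exp (u h)) (C - {i}) r)
     = exp (u i) / (\<Sum>h\<in>C. exp (u h)) * (\<Sum>r\<in>L. QPL (\<lambda>h. exp (u h)) (C - {i}) r)"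
    by (rule sum_distrib_left[symmetric])
  ultimately show ?thesis by (metis mult_1_right)
qed


lemma q_lt1:
  assumes "1 < (a::real)" shows "0 < a * exp (1 - a)" "a * exp (1 - a) < 1"
proof -
  show "0 < a * exp (1 - a)" using assms by simp
  have "ln a < a - 1" using ln_diff_less[of a 1] assms by simp
  hence "exp (ln a) < exp (a - 1)" by simp
  hence "a < exp (a - 1)" using assms by simp
  moreover have "exp (a - 1) * exp (1 - a) = 1" by (simp add: exp_add[symmetric])
  ultimately show "a * exp (1 - a) < 1"
    by (metis exp_gt_zero mult_strict_right_mono)
qed

lemma tail_bound:
  fixes p :: "nat \<Rightarrow> real" and a :: real
  assumes p: "\<forall>h\<in>universe n. 0 < p h \<and> p h \<le> 1"
    and a: "a > 1" and mu: "(\<Sum>h\<in>universe n. p h) \<ge> a * real k"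
  shows "(\<Sum>C\<in>Pow (universe n). if card C < k then cweight n p C else 0) \<le> (a * exp (1 - a)) ^ k"
proof -
  define U where "U = universe n"
  define t where "t = 1 / a"
  have finU: "finite U" by (simp add: U_def universe_def)
  have t: "0 < t" "t < 1" "a * t = 1" using a by (auto simp: t_def)
  have cwnn: "0 \<le> cweight n p C" if "C \<subseteq> U" for C
    unfolding cweight_def using p that U_def
    by (intro mult_nonneg_nonneg prod_nonneg) (auto simp: less_imp_le subset_iff)
  have pt: "(\<Prod>h\<in>C. p h * t) * (\<Prod>h\<in>U - C. 1 - p h) = cweight n p C * t ^ card C" for C
    by (simp add: cweight_def U_def prod.distrib power_mult_distrib mult_ac)
  have step1: "(if card C < k then cweight n p C else 0) \<le> a ^ k * (cweight n p C * t ^ card C)"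
    if "C \<in> Pow U" for C
  proof (cases "card C < k")
    case True
    have "a ^ card C \<le> a ^ k" using True a by (intro power_increasing) auto
    hence "1 \<le> a ^ k * t ^ card C"
      using a t by (simp add: t_def power_divide field_simps)
    hence "cweight n p C * 1 \<le> cweight n p C * (a ^ k * t ^ card C)"
      using cwnn[of C] that by (intro mult_left_mono) auto
    then show ?thesis using True by (simp add: mult_ac)
  next
    case False
    then show ?thesis using cwnn[of C] that t a by simp
  qed
  have "(\<Sum>C\<in>Pow U. if card C < k then cweight n p C else 0)
      \<le> (\<Sum>C\<in>Pow U. a ^ k * (cweight n p C * t ^ card C))"
    by (rule sum_mono) (rule step1)
  also have "\<dots> = a ^ k * (\<Sum>C\<in>Pow U. (\<Prod>h\<in>C. p h * t) * (\<Prod>h\<in>U - C. 1 - p h))"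
    by (simp add: pt sum_distrib_left)
  also have "(\<Sum>C\<in>Pow U. (\<Prod>h\<in>C. p h * t) * (\<Prod>h\<in>U - C. 1 - p h)) = (\<Prod>h\<in>U. p h * t + (1 - p h))"
    by (rule prod_add[symmetric]) (rule finU)
  also have "(\<Prod>h\<in>U. p h * t + (1 - p h)) \<le> (\<Prod>h\<in>U. exp (- ((1 - t) * p h)))"
  proof (rule prod_mono)
    fix h assume "h \<in> U"
    hence "0 < p h" "p h \<le> 1" using p U_def by auto
    moreover have "1 + (- ((1 - t) * p h)) \<le> exp (- ((1 - t) * p h))" by (rule exp_ge_add_one_self)
    moreover have "0 \<le> p h * t" using t \<open>0 < p h\<close> by simp
    ultimately show "0 \<le> p h * t + (1 - p h) \<and> p h * t + (1 - p h) \<le> exp (- ((1 - t) * p h))"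
    proof (intro conjI)
      show "0 \<le> p h * t + (1 - p h)" using \<open>0 \<le> p h * t\<close> \<open>p h \<le> 1\<close> by linarith
      have "p h * t + (1 - p h) = 1 + (- ((1 - t) * p h))" by (simp add: algebra_simps)
      then show "p h * t + (1 - p h) \<le> exp (- ((1 - t) * p h))"
        using \<open>1 + (- ((1 - t) * p h)) \<le> exp (- ((1 - t) * p h))\<close> by simp
    qed
  qed
  also have "\<dots> = exp (- ((1 - t) * (\<Sum>h\<in>U. p h)))"
    by (simp add: exp_sum[OF finU, symmetric] sum_distrib_left sum_negf)
  also have "\<dots> \<le> exp (- ((1 - t) * (a * real k)))"
    using mu t by (simp add: U_def mult_left_mono)
  also have "- ((1 - t) * (a * real k)) = real k * (1 - a)"
    using t by (simp add: algebra_simps)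
  also have "exp (real k * (1 - a)) = exp (1 - a) ^ k"
    by (rule exp_of_nat_mult)
  finally have "(\<Sum>C\<in>Pow U. if card C < k then cweight n p C else 0) \<le> a ^ k * exp (1 - a) ^ k"
    using a by (simp add: mult_left_mono)
  then show ?thesis by (simp add: U_def power_mult_distrib)
qed


theorem theorem6:
  fixes n k :: nat and u p :: "nat \<Rightarrow> real" and \<alpha> :: real and i :: nat
  assumes "1 \<le> k" and "k \<le> n"
    and "\<forall>h\<in>universe n. 0 < p h \<and> p h \<le> 1"
    and "\<alpha> > 1"
    and "(\<Sum>h\<in>universe n. p h) \<ge> \<alpha> * real k"
    and "i \<in> universe n"
  shows "p i \<le> (\<Sum>j\<in>universe n. exp (u j)) / exp (u i) *
           (PrPLC_set n k p u (R_first n k i)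
            + real k * (\<alpha> * exp (1 - \<alpha>)) ^ k / (1 - (\<alpha> * exp (1 - \<alpha>)) ^ k))"
proof -
  define U where "U = universe n"
  define cw where "cw = cweight n p"
  define S where "S = (\<Sum>j\<in>U. exp (u j))"
  define q where "q = \<alpha> * exp (1 - \<alpha>)"
  define z where "z = zkp n k p"
  define R where "R = R_first n k i"
  note p = assms(3)
  have finU: "finite U" by (simp add: U_def universe_def)
  have iU: "i \<in> U" using assms(6) U_def by simp
  have cardU: "card U = n" by (simp add: U_def universe_def)
  have cwnn: "0 \<le> cw C" if "C \<subseteq> U" for C
    unfolding cw_def cweight_def using p that U_def
    by (intro mult_nonneg_nonneg prod_nonneg) (auto simp: less_imp_le subset_iff)
  have total: "(\<Sum>C\<in>Pow U. cw C) = 1"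
  proof -
    have "(\<Prod>h\<in>U. p h + (1 - p h)) = (\<Sum>C\<in>Pow U. (\<Prod>h\<in>C. p h) * (\<Prod>h\<in>U - C. 1 - p h))"
      by (rule prod_add[OF finU])
    then show ?thesis by (simp add: cw_def cweight_def U_def)
  qed
  have pi: "p i = (\<Sum>C\<in>Pow U. if i \<in> C then cw C else 0)"
  proof -
    have e1: "(\<Prod>h\<in>U. p h + (if h = i then 0 else 1 - p h))
        = (\<Sum>C\<in>Pow U. (\<Prod>h\<in>C. p h) * (\<Prod>h\<in>U - C. if h = i then 0 else 1 - p h))"
      by (rule prod_add[OF finU])
    have e2: "(\<Prod>h\<in>U. p h + (if h = i then 0 else 1 - p h)) = (\<Prod>h\<in>U. if h = i then p i else 1)"
      by (rule prod.cong) auto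
    have e3: "(\<Prod>h\<in>U. if h = i then p i else 1) = p i"
      using finU iU by (simp add: prod.delta)
    have e4: "(\<Prod>h\<in>C. p h) * (\<Prod>h\<in>U - C. if h = i then 0 else 1 - p h) = (if i \<in> C then cw C else 0)"
      if "C \<in> Pow U" for C
    proof (cases "i \<in> C")
      case True
      have "(\<Prod>h\<in>U - C. if h = i then 0 else 1 - p h) = (\<Prod>h\<in>U - C. 1 - p h)"
        by (rule prod.cong) (use True in auto)
      then show ?thesis using True by (simp add: cw_def cweight_def U_def)
    next
      case False
      have "(\<Prod>h\<in>U - C. if h = i then 0 else 1 - p h) = 0"
        using finU iU False by (intro prod_zero) auto
      then show ?thesis using False by simp
    qed
    have "p i = (\<Sum>C\<in>Pow U. (\<Prod>h\<in>C. p h) * (\<Prod>h\<in>U - C. if h = i then 0 else 1 - p h))"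
      using e1 e2 e3 by simp
    also have "\<dots> = (\<Sum>C\<in>Pow U. if i \<in> C then cw C else 0)"
      by (rule sum.cong[OF refl]) (rule e4)
    finally show ?thesis .
  qed
  have zdef: "z = (\<Sum>C\<in>{C. C \<subseteq> U \<and> k \<le> card C}. cw C)"
    by (simp add: z_def zkp_def U_def cw_def)
  have finA: "finite {C. C \<subseteq> U \<and> k \<le> card C}" using finU by simp
  have cwU: "0 < cw U"
    unfolding cw_def cweight_def using p by (simp add: U_def prod_pos)
  have zpos: "0 < z"
  proof -
    have "cw U \<le> z" unfolding zdef
      by (rule member_le_sum) (use cwnn cardU assms(2) finA in auto)
    then show ?thesis using cwU by simp
  qed
  have zle: "z \<le> 1"
  proof -
    have "z \<le> (\<Sum>C\<in>Pow U. cw C)" unfolding zdef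
      by (rule sum_mono2) (use finU cwnn in auto)
    then show ?thesis using total by simp
  qed
  have Spos: "0 < S" unfolding S_def using finU iU by (intro sum_pos) auto
  have wiS: "exp (u i) \<le> S" unfolding S_def
    by (rule member_le_sum) (use finU iU in auto)
  define P' where "P' = (\<Sum>C\<in>Pow U. if k \<le> card C \<and> i \<in> C then cw C else 0)"
  define T where "T = (\<Sum>C\<in>Pow U. if card C < k then cw C else 0)"
  have pi_le: "p i \<le> P' + T"
  proof -
    have "p i \<le> (\<Sum>C\<in>Pow U. (if k \<le> card C \<and> i \<in> C then cw C else 0) + (if card C < k then cw C else 0))"
      unfolding pi by (rule sum_mono) (use cwnn in auto)
    then show ?thesis by (simp add: P'_def T_def sum.distrib)
  qed
  have T_le: "T \<le> q ^ k"
    unfolding T_def q_def cw_def U_def by (rule tail_bound[OF p assms(4) assms(5)])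
  have PR: "exp (u i) / S * P' \<le> PrPLC_set n k p u R"
  proof -
    have "PrPLC_set n k p u R = (\<Sum>r\<in>R. \<Sum>C\<in>Pow U. PrC n k p C * PrPL u C r)"
      by (simp add: PrPLC_set_def PrPLC_def U_def)
    also have "\<dots> = (\<Sum>C\<in>Pow U. \<Sum>r\<in>R. PrC n k p C * PrPL u C r)"
      by (rule sum.swap)
    also have "\<dots> = (\<Sum>C\<in>Pow U. PrC n k p C * (\<Sum>r\<in>R. PrPL u C r))"
      by (simp add: sum_distrib_left)
    finally have eq: "PrPLC_set n k p u R = (\<Sum>C\<in>Pow U. PrC n k p C * (\<Sum>r\<in>R. PrPL u C r))" .
    have "exp (u i) / S * P' = (\<Sum>C\<in>Pow U. exp (u i) / S * (if k \<le> card C \<and> i \<in> C then cw C else 0))"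
      by (simp add: P'_def sum_distrib_left)
    also have "\<dots> \<le> (\<Sum>C\<in>Pow U. PrC n k p C * (\<Sum>r\<in>R. PrPL u C r))"
    proof (rule sum_mono)
      fix C assume C: "C \<in> Pow U"
      have PrCnn: "0 \<le> PrC n k p C"
        unfolding PrC_def using cwnn[of C] zpos C by (auto simp: cw_def z_def U_def)
      have sumnn: "0 \<le> (\<Sum>r\<in>R. PrPL u C r)" by (intro sum_nonneg) (simp add: PrPL_nonneg)
      show "exp (u i) / S * (if k \<le> card C \<and> i \<in> C then cw C else 0) \<le> PrC n k p C * (\<Sum>r\<in>R. PrPL u C r)"
      proof (cases "k \<le> card C \<and> i \<in> C")
        case True
        have "cw C \<le> cw C / z"
          using cwnn[of C] C zpos zle by (simp add: le_divide_eq mult_left_le)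
        hence c1: "cw C \<le> PrC n k p C"
          using C True by (simp add: PrC_def cw_def z_def U_def)
        have finC: "finite C" using C finU finite_subset by auto
        have WC: "0 < (\<Sum>h\<in>C. exp (u h))" using True finC by (intro sum_pos) auto
        have "(\<Sum>h\<in>C. exp (u h)) \<le> S" unfolding S_def
          by (rule sum_mono2) (use C finU in auto)
        hence c2: "exp (u i) / S \<le> exp (u i) / (\<Sum>h\<in>C. exp (u h))"
          using WC by (intro divide_left_mono) auto
        have c3: "exp (u i) / (\<Sum>h\<in>C. exp (u h)) \<le> (\<Sum>r\<in>R. PrPL u C r)"
          unfolding R_def by (rule PL_first) (use C True assms(1) in \<open>auto simp: U_def\<close>)
        have "exp (u i) / S * cw C \<le> (\<Sum>r\<in>R. PrPL u C r) * PrC n k p C"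
          by (rule mult_mono) (use c1 c2 c3 sumnn cwnn[of C] C in auto)
        then show ?thesis using True by (simp add: mult_ac)
      next
        case False
        then have "(if k \<le> card C \<and> i \<in> C then cw C else 0) = 0" by auto
        then show ?thesis using PrCnn sumnn by simp
      qed
    qed
    finally show ?thesis using eq by simp
  qed
  have q: "0 < q" "q < 1" using q_lt1[OF assms(4)] q_def by auto
  have qk: "0 < q ^ k" "q ^ k < 1" using q assms(1) by (auto simp: power_less_one_iff)
  define B where "B = real k * q ^ k / (1 - q ^ k)"
  have qB: "q ^ k \<le> B"
  proof -
    have "q ^ k * (1 - q ^ k) \<le> real k * q ^ k"
    proof -
      have "q ^ k * (1 - q ^ k) \<le> q ^ k * 1" using qk by (intro mult_left_mono) auto
      also have "\<dots> \<le> q ^ k * real k" using qk assms(1) by (intro mult_left_mono) auto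
      finally show ?thesis by (simp add: mult_ac)
    qed
    then show ?thesis unfolding B_def using qk by (simp add: le_divide_eq)
  qed
  have Bnn: "0 \<le> B" using qB qk by simp
  have ratio: "1 \<le> S / exp (u i)" using wiS by simp
  have "P' \<le> S / exp (u i) * PrPLC_set n k p u R"
  proof -
    have "S / exp (u i) * (exp (u i) / S * P') = P'" using Spos by simp
    moreover have "S / exp (u i) * (exp (u i) / S * P') \<le> S / exp (u i) * PrPLC_set n k p u R"
      using PR ratio Spos by (intro mult_left_mono) (auto simp: less_imp_le)
    ultimately show ?thesis by simp
  qed
  moreover have "T \<le> S / exp (u i) * B"
  proof -
    have "1 * B \<le> S / exp (u i) * B" using ratio Bnn by (intro mult_right_mono) auto
    then show ?thesis using T_le qB by simp
  qed
  ultimately have "p i \<le> S / exp (u i) * (PrPLC_set n k p u R + B)"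
    using pi_le by (simp add: distrib_left)
  then show ?thesis by (simp add: S_def U_def R_def B_def q_def)
qed

end
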